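(* Let $n\ge 4$, let $a_1,\dots,a_n$ be real numbers, $C(t)=\sum_{j=1}^n a_j\cos jt$, $S(t)=\sum_{j=1}^n a_j\sin jt$. Let $m$ be an integer with $2\le m\le n/2$, let $t_1,\dots,t_m\in(0,\pi)$ be pairwise distinct, and suppose there are real numbers $b_m,\dots,b_{n-m}$ such that for all real $t$ $$S(t)=\prod_{j=1}^m(\cos t-\cos t_j)\cdot\sum_{k=m}^{n-m}b_k\sin kt .$$ Then $C(t_1)=C(t_2)=\dots=C(t_m)$. *)

theory Defs
  imports Complex_Main
begin

end

theory Submission imports Defs "HOL-Computational_Algebra.Polynomial" begin

lemma mapr_mult: "map_poly (of_real :: real \<Rightarrow> complex) (p * q) = map_poly of_real p * map_poly of_real q"
  by (rule poly_eqI) (simp add: coeff_map_poly coeff_mult)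

lemma mapr_prod: "map_poly (of_real :: real \<Rightarrow> complex) (\<Prod>i\<in>A. f i) = (\<Prod>i\<in>A. map_poly of_real (f i))"
  by (induction A rule: infinite_finite_induct) (auto simp: mapr_mult)

lemma mapr_sum: "map_poly (of_real :: real \<Rightarrow> complex) (\<Sum>i\<in>A. f i) = (\<Sum>i\<in>A. map_poly of_real (f i))"
  by (rule poly_eqI) (simp add: coeff_map_poly coeff_sum)

lemma sin_uniq: "\<forall>t::real. (\<Sum>j=1..N. e j * sin (real j * t)) = 0 \<Longrightarrow> \<forall>j\<in>{1..N}. e j = 0"
proof (induction N arbitrary: e)
  case 0 then show ?case by simp
next
  case (Suc N)
  define h where "h = pi / real (Suc N)"
  define c where "c = cos (real (Suc N) * h)"
  have Nh: "real (Suc N) * h = pi" unfolding h_def by simp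
  have c: "c = -1" unfolding c_def Nh by simp
  define e' where "e' j = e j * (2 * (cos (real j * h) - c))" for j
  have "\<forall>t. (\<Sum>j=1..N. e' j * sin (real j * t)) = 0"
  proof
    fix t
    have tm: "e j * sin (real j * (t + h)) + e j * sin (real j * (t - h)) - 2 * c * (e j * sin (real j * t))
        = e j * (2 * (cos (real j * h) - c)) * sin (real j * t)" for j
      by (simp add: distrib_left right_diff_distrib sin_add sin_diff algebra_simps)
    have "0 = (\<Sum>j=1..Suc N. e j * sin (real j * (t + h))) + (\<Sum>j=1..Suc N. e j * sin (real j * (t - h)))
           - 2 * c * (\<Sum>j=1..Suc N. e j * sin (real j * t))"
      using Suc.prems by simp
    also have "\<dots> = (\<Sum>j=1..Suc N. e j * sin (real j * (t + h)) + e j * sin (real j * (t - h)) - 2 * c * (e j * sin (real j * t)))"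
      by (simp only: sum.distrib sum_subtractf sum_distrib_left)
    also have "\<dots> = (\<Sum>j=1..Suc N. e' j * sin (real j * t))"
      by (rule sum.cong) (auto simp: tm e'_def)
    also have "\<dots> = (\<Sum>j=1..N. e' j * sin (real j * t))"
      by (simp add: e'_def c_def)
    finally show "(\<Sum>j=1..N. e' j * sin (real j * t)) = 0" by simp
  qed
  from Suc.IH[OF this] have e'0: "\<forall>j\<in>{1..N}. e' j = 0" .
  have low: "\<forall>j\<in>{1..N}. e j = 0"
  proof
    fix j assume j: "j \<in> {1..N}"
    have "cos pi < cos (real j * h)"
    proof (rule cos_monotone_0_pi)
      show "0 \<le> real j * h" unfolding h_def by simp
      have "real j < real (Suc N)" using j by simp
      then have "real j * pi < real (Suc N) * pi" using pi_gt_zero by (rule mult_strict_right_mono)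
      then show "real j * h < pi" unfolding h_def by (simp add: field_simps)
    qed simp
    then have "cos (real j * h) - c \<noteq> 0" using c by simp
    moreover have "e' j = 0" using e'0 j by blast
    ultimately show "e j = 0" unfolding e'_def by simp
  qed
  have "(\<Sum>j=1..Suc N. e j * sin (real j * (pi / (2 * real (Suc N))))) = 0" using Suc.prems by blast
  then have "e (Suc N) * sin (real (Suc N) * (pi / (2 * real (Suc N)))) = 0"
    using low by simp
  moreover have "real (Suc N) * (pi / (2 * real (Suc N))) = pi / 2" by (simp add: field_simps)
  ultimately have "e (Suc N) * sin (pi/2) = 0" by metis
  then have "e (Suc N) = 0" by simp
  with low show ?case by (auto simp: le_Suc_eq)
qed


lemma factor_id: "poly (map_poly complex_of_real [:1/2, - x, 1/2:]) (cis t) = of_real (cos t - x) * cis t"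
proof -
  have "sin t * sin t = 1 - cos t * cos t" using sin_squared_eq[of t] by (simp add: power2_eq_square)
  show ?thesis
    apply (simp add: map_poly_pCons complex_eq_iff algebra_simps)
    using sin_cos_squared_add3[of t] by (simp add: field_simps)
qed

lemma Re_ofr_mult: "Re (complex_of_real r * w) = r * Re w" by simp
lemma Im_ofr_mult: "Im (complex_of_real r * w) = r * Im w" by simp

lemma cis_sum_Im: "Im (\<Sum>j\<in>A. complex_of_real (f j) * cis t ^ j) = (\<Sum>j\<in>A. f j * sin (real j * t))"
  by (simp add: Im_sum DeMoivre)

lemma cis_sum_Re: "Re (\<Sum>j\<in>A. complex_of_real (f j) * cis t ^ j) = (\<Sum>j\<in>A. f j * cos (real j * t))"
  by (simp add: Re_sum DeMoivre)

theorem lemma5: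
  fixes n m :: nat and a tt b :: "nat \<Rightarrow> real"
  assumes "n \<ge> 4"
    and "2 \<le> m" and "2 * m \<le> n"
    and "\<forall>j\<in>{1..m}. 0 < tt j \<and> tt j < pi"
    and "inj_on tt {1..m}"
    and "\<forall>t::real. (\<Sum>j=1..n. a j * sin (real j * t)) =
           (\<Prod>j=1..m. cos t - cos (tt j)) * (\<Sum>k=m..n-m. b k * sin (real k * t))"
  shows "\<forall>i\<in>{1..m}. \<forall>j\<in>{1..m}.
           (\<Sum>k=1..n. a k * cos (real k * tt i)) = (\<Sum>k=1..n. a k * cos (real k * tt j))"
proof -
  define x where "x j = cos (tt j)" for j
  define PP :: "real poly" where "PP = (\<Prod>j\<in>{1..m}. [:1/2, - x j, 1/2:])"
  define BB :: "real poly" where "BB = (\<Sum>k\<in>{m..n-m}. monom (b k) (k - m))"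
  define QQ where "QQ = PP * BB"
  define d where "d j = coeff QQ j" for j
  have degP: "degree PP \<le> 2 * m"
  proof -
    have "degree PP \<le> sum (degree \<circ> (\<lambda>j. [:1/2, - x j, 1/2:])) {1..m}"
      unfolding PP_def by (rule degree_prod_sum_le) simp
    also have "\<dots> = sum (\<lambda>j. 2) {1..m}" by (rule sum.cong) auto
    finally show ?thesis by simp
  qed
  have degB: "degree BB \<le> n - 2 * m"
    unfolding BB_def
  proof (rule degree_sum_le)
    fix k assume "k \<in> {m..n-m}"
    then have "k - m \<le> n - 2 * m" by auto
    then show "degree (monom (b k) (k - m)) \<le> n - 2 * m"
      using degree_monom_le order_trans by blast
  qed simp
  have degQ: "degree QQ \<le> n"
    unfolding QQ_def using degree_mult_le[of PP BB] degP degB assms(3) by linarith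
  have key: "(\<Sum>j\<le>n. complex_of_real (d j) * cis t ^ j) =
      of_real (\<Prod>j=1..m. cos t - x j) * (\<Sum>k=m..n-m. complex_of_real (b k) * cis t ^ k)" for t
  proof -
    define z where "z = cis t"
    have "(\<Sum>j\<le>n. complex_of_real (d j) * z ^ j) = (\<Sum>j\<le>degree QQ. complex_of_real (d j) * z ^ j)"
    proof (rule sum.mono_neutral_right)
      show "\<forall>i\<in>{..n} - {..degree QQ}. complex_of_real (d i) * z ^ i = 0"
        by (auto simp: d_def coeff_eq_0)
    qed (use degQ in auto)
    also have "\<dots> = poly (map_poly complex_of_real QQ) z"
      by (simp add: poly_altdef degree_map_poly coeff_map_poly d_def)
    also have "\<dots> = poly (map_poly complex_of_real PP) z * poly (map_poly complex_of_real BB) z"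
      by (simp add: QQ_def mapr_mult)
    also have "poly (map_poly complex_of_real PP) z = (\<Prod>j\<in>{1..m}. of_real (cos t - x j) * z)"
      by (simp add: PP_def mapr_prod poly_prod factor_id z_def)
    also have "\<dots> = of_real (\<Prod>j=1..m. cos t - x j) * z ^ m"
      by (simp add: prod.distrib)
    also have "poly (map_poly complex_of_real BB) z = (\<Sum>k\<in>{m..n-m}. of_real (b k) * z ^ (k - m))"
      by (simp add: BB_def mapr_sum poly_sum map_poly_monom poly_monom)
    also have "of_real (\<Prod>j=1..m. cos t - x j) * z ^ m * (\<Sum>k\<in>{m..n-m}. of_real (b k) * z ^ (k - m))
        = of_real (\<Prod>j=1..m. cos t - x j) * (\<Sum>k\<in>{m..n-m}. of_real (b k) * z ^ k)"
    proof -
      have "z ^ m * (\<Sum>k\<in>{m..n-m}. of_real (b k) * z ^ (k - m)) = (\<Sum>k\<in>{m..n-m}. of_real (b k) * z ^ k)"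
        unfolding sum_distrib_left
      proof (rule sum.cong)
        fix k assume "k \<in> {m..n-m}"
        then have "k = m + (k - m)" by auto
        then have "z ^ k = z ^ m * z ^ (k - m)" by (metis power_add)
        then show "z ^ m * (of_real (b k) * z ^ (k - m)) = of_real (b k) * z ^ k" by simp
      qed simp
      then show ?thesis by (simp add: mult.assoc)
    qed
    finally show ?thesis by (simp add: z_def)
  qed
  have split0: "(\<Sum>j\<le>n. f j) = f 0 + (\<Sum>j=1..n. f j)" for f :: "nat \<Rightarrow> real"
    by (simp add: atMost_atLeast0 sum.atLeast_Suc_atMost)
  have hS: "(\<Sum>j=1..n. d j * sin (real j * t)) = (\<Prod>j=1..m. cos t - x j) * (\<Sum>k=m..n-m. b k * sin (real k * t))" for t
    using arg_cong[OF key[of t], of Im] split0[of "\<lambda>j. d j * sin (real j * t)"]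
    by (simp only: cis_sum_Im Im_ofr_mult Im_complex_of_real) simp
  have hC: "d 0 + (\<Sum>j=1..n. d j * cos (real j * t)) = (\<Prod>j=1..m. cos t - x j) * (\<Sum>k=m..n-m. b k * cos (real k * t))" for t
    using arg_cong[OF key[of t], of Re] split0[of "\<lambda>j. d j * cos (real j * t)"]
    by (simp only: cis_sum_Re Re_ofr_mult Re_complex_of_real) simp
  have "\<forall>t. (\<Sum>j=1..n. (a j - d j) * sin (real j * t)) = 0"
    using assms(6) hS by (simp add: left_diff_distrib sum_subtractf x_def)
  from sin_uniq[OF this] have ad: "\<forall>j\<in>{1..n}. a j = d j" by simp
  have val: "(\<Sum>k=1..n. a k * cos (real k * tt i)) = - d 0" if i: "i \<in> {1..m}" for i
  proof -
    have "(\<Prod>j=1..m. cos (tt i) - x j) = 0"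
      using i by (simp add: x_def) (metis atLeastAtMost_iff i)
    then have "d 0 + (\<Sum>j=1..n. d j * cos (real j * tt i)) = 0" using hC[of "tt i"] by simp
    moreover have "(\<Sum>k=1..n. a k * cos (real k * tt i)) = (\<Sum>j=1..n. d j * cos (real j * tt i))"
      using ad by simp
    ultimately show ?thesis by simp
  qed
  show ?thesis using val by simp
qed

end
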